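(* Let $f$ be an analytic function on $\mathbb{D}=\{z\in\mathbb{C}:|z|<1\}$ with $f(0)=0$, $f'(0)=1$ and $f(z)\neq 0$ for $0<|z|<1$. Let $LU_f=\{c\in\mathbb{C}: K_c[f]\text{ is locally univalent on }\mathbb{D}\}$. Then $1$ is an interior point of $LU_f$ if and only if $f(z)/(zf'(z))$ is bounded on $\mathbb{D}$.
   Context: Let $\operatorname{Log}(f(z)/z)$ denote the branch of $\log(f(z)/z)$ on $\mathbb{D}$ vanishing at $z=0$, and for $c\in\mathbb{C}$ set $K_c[f](z)=z\exp\big(c\operatorname{Log}(f(z)/z)\big)$. An analytic function $g$ is locally univalent on $\mathbb{D}$ if $g'(z)\ne 0$ for all $z\in\mathbb{D}$. *)

theory Defs
  imports "HOL-Complex_Analysis.Complex_Analysis"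
begin

text \<open>The branch Log(f(z)/z) on the unit disc vanishing at 0: a holomorphic g on the
disc with g 0 = 0 and exp (g z) = f z / z for z \<noteq> 0 (unique when it exists).\<close>
definition Log_quot :: "(complex \<Rightarrow> complex) \<Rightarrow> complex \<Rightarrow> complex" where
  "Log_quot f = (SOME g. g holomorphic_on ball 0 1 \<and> g 0 = 0 \<and>
                    (\<forall>z\<in>ball 0 1 - {0}. exp (g z) = f z / z))"

definition K_op :: "complex \<Rightarrow> (complex \<Rightarrow> complex) \<Rightarrow> complex \<Rightarrow> complex" where
  "K_op c f = (\<lambda>z. z * exp (c * Log_quot f z))"

definition locally_univalent :: "(complex \<Rightarrow> complex) \<Rightarrow> complex set \<Rightarrow> bool" where
  "locally_univalent g S \<longleftrightarrow> g holomorphic_on S \<and> (\<forall>z\<in>S. deriv g z \<noteq> 0)"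

definition LU :: "(complex \<Rightarrow> complex) \<Rightarrow> complex set" where
  "LU f = {c. locally_univalent (K_op c f) (ball 0 1)}"

end

theory Submission
  imports Defs
begin

lemma LQ_exists:
  assumes hol: "f holomorphic_on ball 0 1" and f0: "f 0 = 0" and d: "deriv f 0 = 1"
   and nz: "\<forall>z. 0 < norm z \<and> norm z < 1 \<longrightarrow> f z \<noteq> 0"
  shows "\<exists>g. g holomorphic_on ball 0 1 \<and> g 0 = 0 \<and> (\<forall>z\<in>ball 0 1 - {0}. exp (g z) = f z / z)"
proof -
  define h where "h = (\<lambda>z. if z = 0 then deriv f 0 else (f z - f 0) / (z - 0))"
  have hh: "h holomorphic_on ball 0 1" unfolding h_def by (rule pole_lemma[OF hol]) simp
  have hnz: "h z \<noteq> 0" if "z \<in> ball 0 1" for z using nz that d f0 by (auto simp: h_def)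
  obtain g where g: "g holomorphic_on ball 0 1" "\<And>z. z \<in> ball 0 1 \<Longrightarrow> h z = exp (g z)"
    using contractible_imp_holomorphic_log[OF hh _ hnz] convex_imp_contractible[of "ball (0::complex) 1"] by auto
  show ?thesis
  proof (intro exI conjI ballI)
    show "(\<lambda>z. g z - g 0) holomorphic_on ball 0 1" using g by (intro holomorphic_intros) auto
    show "g 0 - g 0 = 0" by simp
    fix z :: complex assume z: "z \<in> ball 0 1 - {0}"
    have "exp (g z - g 0) = exp (g z) / exp (g 0)" by (simp add: exp_diff)
    also have "... = h z / h 0" using g z by simp
    also have "... = f z / z" using z d f0 by (simp add: h_def)
    finally show "exp (g z - g 0) = f z / z" .
  qed
qed

lemma inv_bound_aux:
  fixes x :: complex
  assumes "norm (inverse x) \<le> M" "x \<noteq> 0" "M \<ge> 1"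
  shows "1 / M \<le> norm x"
proof -
  have n: "norm x > 0" using assms(2) by simp
  have "inverse (norm x) \<le> M" using assms(1) by (simp add: norm_inverse)
  hence "1 \<le> M * norm x" using n by (simp add: field_simps)
  thus ?thesis using assms(3) n by (simp add: field_simps)
qed

theorem lemma2p1:
  fixes f :: "complex \<Rightarrow> complex"
  assumes "f holomorphic_on ball 0 1"
    and "f 0 = 0"
    and "deriv f 0 = 1"
    and "\<forall>z. 0 < norm z \<and> norm z < 1 \<longrightarrow> f z \<noteq> 0"
  shows "1 \<in> interior (LU f) \<longleftrightarrow>
         bounded ((\<lambda>z. f z / (z * deriv f z)) ` (ball 0 1 - {0}))"
proof -
  define B where "B = ball (0::complex) 1"
  define g where "g = Log_quot f"
  have "g holomorphic_on B \<and> g 0 = 0 \<and> (\<forall>z\<in>B - {0}. exp (g z) = f z / z)"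
    unfolding g_def Log_quot_def B_def by (rule someI_ex[OF LQ_exists[OF assms]])
  hence gh: "g holomorphic_on B" and g0: "g 0 = 0" and ge: "\<And>z. z \<in> B - {0} \<Longrightarrow> exp (g z) = f z / z"
    by auto
  have oB: "open B" unfolding B_def by simp
  have gd: "(g has_field_derivative deriv g z) (at z)" if "z \<in> B" for z
    using gh oB that holomorphic_derivI by blast
  have fd: "(f has_field_derivative deriv f z) (at z)" if "z \<in> B" for z
    using assms(1) oB that holomorphic_derivI unfolding B_def by blast
  define w where "w z = z * deriv g z" for z
  have w0: "w 0 = 0" by (simp add: w_def)
  have wh: "w holomorphic_on B" unfolding w_def
    using gh oB by (intro holomorphic_intros holomorphic_deriv) auto
  have Kd: "deriv (K_op c f) z = exp (c * g z) * (1 + c * w z)" if "z \<in> B" for c z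
  proof -
    have "(K_op c f has_field_derivative exp (c * g z) * (1 + c * w z)) (at z)"
      unfolding K_op_def g_def[symmetric] w_def
      using gd[OF that] by (auto intro!: derivative_eq_intros simp: algebra_simps)
    thus ?thesis by (rule DERIV_imp_deriv)
  qed
  have Kh: "K_op c f holomorphic_on B" for c
    unfolding K_op_def g_def[symmetric] using gh by (intro holomorphic_intros)
  have LUeq: "LU f = {c. \<forall>z\<in>B. 1 + c * w z \<noteq> 0}"
    unfolding LU_def locally_univalent_def B_def[symmetric] using Kh Kd by auto
  have rel: "f z / (z * deriv f z) = inverse (1 + w z)" if z: "z \<in> B - {0}" for z
  proof -
    have oS: "open (B - {0})" using oB by auto
    have "((\<lambda>z. z * exp (g z)) has_field_derivative exp (g z) * (1 + w z)) (at z)"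
      using gd z unfolding w_def by (auto intro!: derivative_eq_intros simp: algebra_simps)
    hence "(f has_field_derivative exp (g z) * (1 + w z)) (at z)"
      by (rule has_field_derivative_transform_within_open[OF _ oS z]) (use ge in auto)
    hence "deriv f z = exp (g z) * (1 + w z)" using fd z DERIV_unique by blast
    hence "z * deriv f z = f z * (1 + w z)" using ge[OF z] z by auto
    moreover have "f z \<noteq> 0" using assms(4) z unfolding B_def by auto
    ultimately show ?thesis by (simp add: divide_simps)
  qed
  have bdeq: "((\<lambda>z. f z / (z * deriv f z)) ` (ball 0 1 - {0})) = (\<lambda>z. inverse (1 + w z)) ` (B - {0})"
    using rel unfolding B_def by (auto simp: image_def)
  show ?thesis unfolding bdeq LUeq
  proof
    assume "1 \<in> interior {c. \<forall>z\<in>B. 1 + c * w z \<noteq> 0}"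
    then obtain e where e: "e > 0" "ball 1 e \<subseteq> {c. \<forall>z\<in>B. 1 + c * w z \<noteq> 0}"
      by (meson mem_interior)
    define d where "d = min (1/2) (e/4)"
    have d: "d > 0" "d \<le> 1/2" "d \<le> e/4" using e by (auto simp: d_def)
    have low: "norm (1 + w z) \<ge> d" if z: "z \<in> B" for z
    proof (rule ccontr)
      assume "\<not> d \<le> norm (1 + w z)"
      hence lt: "norm (1 + w z) < d" by simp
      have "norm (w z) \<ge> 1/2"
      proof -
        have "1 \<le> norm (1 + w z) + norm (w z)"
          using norm_triangle_ineq4[of "1 + w z" "w z"] by simp
        thus ?thesis using lt d by linarith
      qed
      hence wnz: "w z \<noteq> 0" by auto
      define c where "c = - 1 / w z"
      have "c - 1 = - (1 + w z) / w z" using wnz by (simp add: c_def field_simps)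
      hence "norm (c - 1) = norm (-(1 + w z)) / norm (w z)" by (simp add: norm_divide)
      hence "norm (c - 1) = norm (1 + w z) / norm (w z)" by (simp only: norm_minus_cancel)
      also have "... \<le> norm (1 + w z) / (1/2)"
        using \<open>norm (w z) \<ge> 1/2\<close> by (intro divide_left_mono) auto
      also have "... < e" using lt d by simp
      finally have "c \<in> ball 1 e" by (simp add: dist_norm norm_minus_commute)
      hence "1 + c * w z \<noteq> 0" using e z by auto
      moreover have "1 + c * w z = 0" using wnz by (simp add: c_def)
      ultimately show False by simp
    qed
    show "bounded ((\<lambda>z. inverse (1 + w z)) ` (B - {0}))"
      unfolding bounded_iff
    proof (intro exI ballI)
      fix y assume "y \<in> (\<lambda>z. inverse (1 + w z)) ` (B - {0})"
      then obtain z where z: "z \<in> B" "y = inverse (1 + w z)" by auto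
      have "norm y = inverse (norm (1 + w z))" by (simp add: z(2) norm_inverse)
      also have "... \<le> inverse d" using low[OF z(1)] d by (intro le_imp_inverse_le) auto
      finally show "norm y \<le> 1/d" by (simp add: divide_inverse)
    qed
  next
    assume "bounded ((\<lambda>z. inverse (1 + w z)) ` (B - {0}))"
    then obtain M0 where M0: "\<And>z. z \<in> B - {0} \<Longrightarrow> norm (inverse (1 + w z)) \<le> M0"
      unfolding bounded_iff by auto
    define M where "M = max 1 M0"
    have M: "M \<ge> 1" "\<And>z. z \<in> B - {0} \<Longrightarrow> norm (inverse (1 + w z)) \<le> M"
      using M0 by (auto simp: M_def intro: order_trans[OF _ max.cobounded2])
    have ph: "(\<lambda>z. 1 + w z) holomorphic_on B" using wh by (intro holomorphic_intros)
    have nz: "1 + w z \<noteq> 0" if z: "z \<in> B" for z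
    proof
      assume z0: "1 + w z = 0"
      have "0 \<in> B" by (simp add: B_def)
      obtain r where r: "0 < r" "ball z r \<subseteq> B" "\<And>u. u \<in> ball z r - {z} \<Longrightarrow> 1 + w u \<noteq> 0"
        using isolated_zeros[OF ph oB _ z z0 \<open>0 \<in> B\<close>] w0 unfolding B_def by auto
      have ev1: "eventually (\<lambda>u. u \<in> ball z r - {z}) (at z)"
        using r(1) by (simp add: eventually_at_filter eventually_nhds_metric) (auto simp: dist_commute)
      have ev2: "eventually (\<lambda>u. u \<noteq> 0) (at z)"
        using eventually_neq_at_within[of 0 z UNIV] by simp
      have cont: "continuous_on B (\<lambda>u. 1 + w u)" using ph holomorphic_on_imp_continuous_on by blast
      hence "((\<lambda>u. 1 + w u) \<longlongrightarrow> 0) (at z)"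
        using z z0 oB by (metis continuous_on_eq_continuous_at continuous_at)
      hence "eventually (\<lambda>u. norm (1 + w u) < 1 / M) (at z)"
        using M(1) by (auto simp: tendsto_iff dist_norm)
      moreover have "eventually (\<lambda>u. norm (1 + w u) \<ge> 1 / M) (at z)"
        using ev1 ev2
      proof eventually_elim
        case (elim u)
        hence u: "u \<in> B - {0}" "1 + w u \<noteq> 0" using r by auto
        have "norm (inverse (1 + w u)) \<le> M" using M(2)[OF u(1)] .
        thus ?case using u(2) M(1) by (rule inv_bound_aux)
      qed
      ultimately have "eventually (\<lambda>u. False) (at z)"
        by eventually_elim simp
      thus False by (simp add: trivial_limit_at)
    qed
    have low: "norm (1 + w z) \<ge> 1 / M" if "z \<in> B" for z
    proof (cases "z = 0")
      case True thus ?thesis using w0 M(1) by simp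
    next
      case False
      hence "norm (inverse (1 + w z)) \<le> M" using M(2) that by auto
      thus ?thesis using nz[OF that] M(1) by (rule inv_bound_aux)
    qed
    define e where "e = 1 / (4 * M)"
    have e: "e > 0" "e \<le> 1/4" using M(1) by (auto simp: e_def field_simps)
    have "ball 1 e \<subseteq> {c. \<forall>z\<in>B. 1 + c * w z \<noteq> 0}"
    proof (safe)
      fix c z assume c: "c \<in> ball 1 e" and z: "z \<in> B" and eq: "1 + c * w z = 0"
      have ce: "norm (c - 1) < e" using c by (simp add: dist_norm norm_minus_commute)
      have "norm c \<ge> 1 - norm (c - 1)" using norm_triangle_ineq2[of 1 "1 - c"]
        by (simp add: norm_minus_commute)
      hence nc: "norm c \<ge> 1/2" using ce e by linarith
      have id: "1 + c * w z = c * (1 + w z) - (c - 1)" by (simp add: algebra_simps)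
      have "norm (c * (1 + w z)) \<ge> (1/2) * (1 / M)"
        unfolding norm_mult using nc low[OF z] M(1) by (intro mult_mono) auto
      moreover have "norm (c * (1 + w z)) \<le> norm (1 + c * w z) + norm (c - 1)"
        unfolding id using norm_triangle_ineq[of "c * (1 + w z) - (c - 1)" "c - 1"] by simp
      ultimately have "(1/2) * (1/M) \<le> e" using eq ce by simp
      thus False using M(1) by (simp add: e_def field_simps)
    qed
    thus "1 \<in> interior {c. \<forall>z\<in>B. 1 + c * w z \<noteq> 0}"
      using e(1) by (meson centre_in_ball interior_maximal open_ball subsetD interior_subset)
  qed
qed

end
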